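(* Let $\vec{G}$ be a DDMOG of order $n$ with $imb(\vec{G})=1$. Then there exists a DDMOG $\vec{G'}$ of order $n+1$ with $imb(\vec{G'})=0$ that contains $\vec{G}$ as an induced subgraph.
   Context: An oriented graph is a finite digraph without loops such that whenever $(u,v)$ is an arc, $(v,u)$ is not. For a vertex $v$, $N^+(v)=\{u:(u,v)\text{ is an arc}\}$, $N^-(v)=\{u:(v,u)\text{ is an arc}\}$, $imb(v)=|N^+(v)|-|N^-(v)|$, and the imbalance of the oriented graph is $imb(\vec{G})=\max_{v}|imb(v)|$. For a labeling $f$, $wt_f(v)=\sum_{u\in N^+(v)}f(u)-\sum_{u\in N^-(v)}f(u)$. A difference distance magic (DDM) labeling of an oriented graph on $n$ vertices is a bijection $f:V\to\{1,\dots,n\}$ with $wt_f(v)=0$ for all $v$; a DDMOG (difference distance magic oriented graph) is an oriented graph admitting a DDM labeling. *)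

theory Defs
  imports Main
begin

definition oriented_graph :: "'a set \<Rightarrow> ('a \<times> 'a) set \<Rightarrow> bool" where
  "oriented_graph V A \<longleftrightarrow> finite V \<and> A \<subseteq> V \<times> V \<and>
     (\<forall>v. (v, v) \<notin> A) \<and> (\<forall>u v. (u, v) \<in> A \<longrightarrow> (v, u) \<notin> A)"

text \<open>Following the paper: N+(v) = {u. (u,v) is an arc}, N-(v) = {u. (v,u) is an arc}.\<close>
definition in_nbrs :: "('a \<times> 'a) set \<Rightarrow> 'a \<Rightarrow> 'a set" where
  "in_nbrs A v = {u. (u, v) \<in> A}"

definition out_nbrs :: "('a \<times> 'a) set \<Rightarrow> 'a \<Rightarrow> 'a set" where
  "out_nbrs A v = {u. (v, u) \<in> A}"

definition imb_vertex :: "('a \<times> 'a) set \<Rightarrow> 'a \<Rightarrow> int" where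
  "imb_vertex A v = int (card (in_nbrs A v)) - int (card (out_nbrs A v))"

definition imbalance :: "'a set \<Rightarrow> ('a \<times> 'a) set \<Rightarrow> int" where
  "imbalance V A = Max ((\<lambda>v. \<bar>imb_vertex A v\<bar>) ` V)"

definition wt :: "('a \<times> 'a) set \<Rightarrow> ('a \<Rightarrow> int) \<Rightarrow> 'a \<Rightarrow> int" where
  "wt A f v = (\<Sum>u\<in>in_nbrs A v. f u) - (\<Sum>u\<in>out_nbrs A v. f u)"

definition DDM_labeling :: "'a set \<Rightarrow> ('a \<times> 'a) set \<Rightarrow> ('a \<Rightarrow> int) \<Rightarrow> bool" where
  "DDM_labeling V A f \<longleftrightarrow> bij_betw f V {1..int (card V)} \<and> (\<forall>v\<in>V. wt A f v = 0)"

definition DDMOG :: "'a set \<Rightarrow> ('a \<times> 'a) set \<Rightarrow> bool" where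
  "DDMOG V A \<longleftrightarrow> oriented_graph V A \<and> (\<exists>f. DDM_labeling V A f)"

definition induced_embedding :: "('a \<Rightarrow> 'b) \<Rightarrow> 'a set \<Rightarrow> ('a \<times> 'a) set \<Rightarrow> 'b set \<Rightarrow> ('b \<times> 'b) set \<Rightarrow> bool" where
  "induced_embedding h V A V' A' \<longleftrightarrow> inj_on h V \<and> h ` V \<subseteq> V' \<and>
     (\<forall>u\<in>V. \<forall>v\<in>V. (u, v) \<in> A \<longleftrightarrow> (h u, h v) \<in> A')"

end

theory Submission
  imports Defs
begin

lemma fin_in: "finite A \<Longrightarrow> finite (in_nbrs A v)"
proof -
  assume "finite A"
  have "in_nbrs A v \<subseteq> fst ` A" unfolding in_nbrs_def by force
  thus ?thesis using \<open>finite A\<close> finite_subset by blast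
qed

lemma fin_out: "finite A \<Longrightarrow> finite (out_nbrs A v)"
proof -
  assume "finite A"
  have "out_nbrs A v \<subseteq> snd ` A" unfolding out_nbrs_def by force
  thus ?thesis using \<open>finite A\<close> finite_subset by blast
qed

lemma sum_in_nbrs:
  assumes "finite V" "finite A" "A \<subseteq> V \<times> V"
  shows "(\<Sum>v\<in>V. \<Sum>u\<in>in_nbrs A v. h u v) = (\<Sum>p\<in>A. h (fst p) (snd p))"
proof -
  have "(\<Sum>v\<in>V. \<Sum>u\<in>in_nbrs A v. h u v) = (\<Sum>(v,u)\<in>Sigma V (in_nbrs A). h u v)"
    by (rule sum.Sigma) (use assms fin_in in auto)
  also have "Sigma V (in_nbrs A) = prod.swap ` A"
    using assms(3) unfolding in_nbrs_def by force
  also have "(\<Sum>(v,u)\<in>prod.swap ` A. h u v) = (\<Sum>p\<in>A. h (fst p) (snd p))"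
    by (subst sum.reindex) (auto simp: case_prod_beta)
  finally show ?thesis .
qed

lemma sum_out_nbrs:
  assumes "finite V" "finite A" "A \<subseteq> V \<times> V"
  shows "(\<Sum>v\<in>V. \<Sum>u\<in>out_nbrs A v. h v u) = (\<Sum>p\<in>A. h (fst p) (snd p))"
proof -
  have "(\<Sum>v\<in>V. \<Sum>u\<in>out_nbrs A v. h v u) = (\<Sum>(v,u)\<in>Sigma V (out_nbrs A). h v u)"
    by (rule sum.Sigma) (use assms fin_out in auto)
  also have "Sigma V (out_nbrs A) = A"
    using assms(3) unfolding out_nbrs_def by force
  finally show ?thesis by (simp add: case_prod_beta)
qed

lemma sum_imb:
  assumes "finite V" "finite A" "A \<subseteq> V \<times> V"
  shows "(\<Sum>v\<in>V. imb_vertex A v) = 0"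
proof -
  have "(\<Sum>v\<in>V. imb_vertex A v) = (\<Sum>v\<in>V. \<Sum>u\<in>in_nbrs A v. (1::int)) - (\<Sum>v\<in>V. \<Sum>u\<in>out_nbrs A v. (1::int))"
    unfolding imb_vertex_def by (simp add: sum_subtractf)
  also have "\<dots> = 0"
    using sum_in_nbrs[OF assms, of "\<lambda>u v. (1::int)"] sum_out_nbrs[OF assms, of "\<lambda>u v. (1::int)"] by simp
  finally show ?thesis .
qed

lemma sum_f_imb:
  assumes "finite V" "finite A" "A \<subseteq> V \<times> V" "\<forall>v\<in>V. wt A f v = 0"
  shows "(\<Sum>v\<in>V. f v * imb_vertex A v) = 0"
proof -
  have "(\<Sum>v\<in>V. f v * imb_vertex A v) = (\<Sum>v\<in>V. \<Sum>u\<in>in_nbrs A v. f v) - (\<Sum>v\<in>V. \<Sum>u\<in>out_nbrs A v. f v)"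
    unfolding imb_vertex_def by (simp add: sum_subtractf algebra_simps)
  also have "\<dots> = (\<Sum>p\<in>A. f (snd p)) - (\<Sum>p\<in>A. f (fst p))"
    using sum_in_nbrs[OF assms(1-3), of "\<lambda>u v. f v"] sum_out_nbrs[OF assms(1-3), of "\<lambda>v u. f v"] by simp
  also have "\<dots> = - ((\<Sum>v\<in>V. \<Sum>u\<in>in_nbrs A v. f u) - (\<Sum>v\<in>V. \<Sum>u\<in>out_nbrs A v. f u))"
    using sum_in_nbrs[OF assms(1-3), of "\<lambda>u v. f u"] sum_out_nbrs[OF assms(1-3), of "\<lambda>v u. f u"] by simp
  also have "(\<Sum>v\<in>V. \<Sum>u\<in>in_nbrs A v. f u) - (\<Sum>v\<in>V. \<Sum>u\<in>out_nbrs A v. f u) = (\<Sum>v\<in>V. wt A f v)"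
    unfolding wt_def by (simp add: sum_subtractf)
  also have "\<dots> = 0" using assms(4) by simp
  finally show ?thesis by simp
qed


theorem theorem1:
  fixes V :: "'a set" and A :: "('a \<times> 'a) set" and n :: nat
  assumes "DDMOG V A" and "card V = n" and "imbalance V A = 1"
  shows "\<exists>(V' :: 'a option set) A' h. DDMOG V' A' \<and> card V' = n + 1 \<and>
           imbalance V' A' = 0 \<and> induced_embedding h V A V' A'"
proof -
  from assms(1) obtain f where og: "oriented_graph V A" and ddm: "DDM_labeling V A f"
    unfolding DDMOG_def by blast
  have finV: "finite V" and AV: "A \<subseteq> V \<times> V" and noloop: "\<And>v. (v,v) \<notin> A"
    and asym: "\<And>u v. (u,v) \<in> A \<Longrightarrow> (v,u) \<notin> A"
    using og unfolding oriented_graph_def by auto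
  have finA: "finite A" using finV AV finite_subset by blast
  have bij: "bij_betw f V {1..int n}" and wt0: "\<forall>v\<in>V. wt A f v = 0"
    using ddm assms(2) unfolding DDM_labeling_def by auto
  let ?i = "imb_vertex A"
  have imb_le: "\<bar>?i v\<bar> \<le> 1" if "v \<in> V" for v
  proof -
    have "\<bar>?i v\<bar> \<le> imbalance V A" unfolding imbalance_def
      using finV that by (intro Max_ge) auto
    thus ?thesis using assms(3) by simp
  qed
  define P where "P = {v\<in>V. ?i v = 1}"
  define M where "M = {v\<in>V. ?i v = -1}"
  have finP: "finite P" and finM: "finite M" using finV unfolding P_def M_def by auto
  have PM: "P \<inter> M = {}" unfolding P_def M_def by auto
  have idec: "?i v = (if v \<in> P then 1 else 0) - (if v \<in> M then 1 else 0)" if "v \<in> V" for v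
    using imb_le[OF that] that unfolding P_def M_def by auto
  have cardPM: "int (card P) = int (card M)"
  proof -
    have "0 = (\<Sum>v\<in>V. ?i v)" using sum_imb[OF finV finA AV] by simp
    also have "\<dots> = (\<Sum>v\<in>V. (if v \<in> P then 1 else 0) - (if v \<in> M then (1::int) else 0))"
      using idec by (intro sum.cong) auto
    also have "\<dots> = (\<Sum>v\<in>V. (if v \<in> P then 1 else 0)) - (\<Sum>v\<in>V. if v \<in> M then (1::int) else 0)"
      by (simp add: sum_subtractf)
    also have "\<dots> = int (card P) - int (card M)"
      using finV unfolding P_def M_def by (simp add: sum.If_cases Int_def)
    finally show ?thesis by simp
  qed
  have sumPM: "(\<Sum>v\<in>P. f v) = (\<Sum>v\<in>M. f v)"
  proof -
    have "0 = (\<Sum>v\<in>V. f v * ?i v)" using sum_f_imb[OF finV finA AV wt0] by simp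
    also have "\<dots> = (\<Sum>v\<in>V. (if v \<in> P then f v else 0) - (if v \<in> M then f v else 0))"
      using idec by (intro sum.cong) auto
    also have "\<dots> = (\<Sum>v\<in>V. (if v \<in> P then f v else 0)) - (\<Sum>v\<in>V. if v \<in> M then f v else 0)"
      by (simp add: sum_subtractf)
    also have "\<dots> = (\<Sum>v\<in>P. f v) - (\<Sum>v\<in>M. f v)"
      using finV unfolding P_def M_def by (simp add: sum.If_cases Int_def)
    finally show ?thesis by simp
  qed
  define V' where "V' = insert None (Some ` V)"
  define A' where "A' = (\<lambda>(u,v). (Some u, Some v)) ` A \<union> (\<lambda>v. (Some v, None)) ` P \<union> (\<lambda>v. (None, Some v)) ` M"
  define g where "g = (\<lambda>x. case x of None \<Rightarrow> (1::int) | Some v \<Rightarrow> f v + 1)"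
  have in_S: "in_nbrs A' (Some v) = (if v \<in> M then insert None (Some ` in_nbrs A v) else Some ` in_nbrs A v)" for v
    unfolding A'_def in_nbrs_def by auto
  have out_S: "out_nbrs A' (Some v) = (if v \<in> P then insert None (Some ` out_nbrs A v) else Some ` out_nbrs A v)" for v
    unfolding A'_def out_nbrs_def by auto
  have in_N: "in_nbrs A' None = Some ` P" unfolding A'_def in_nbrs_def by auto
  have out_N: "out_nbrs A' None = Some ` M" unfolding A'_def out_nbrs_def by auto
  have gN: "g None = 1" unfolding g_def by simp
  have sumS: "sum g (Some ` X) = sum f X + int (card X)" if "finite X" for X
    using that by (simp add: sum.reindex g_def sum.distrib)
  have cardV': "card V' = n + 1"
    unfolding V'_def using finV assms(2) by (simp add: card_image)
  have PV: "P \<subseteq> V" and MV: "M \<subseteq> V" unfolding P_def M_def by auto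
  have og': "oriented_graph V' A'"
    unfolding oriented_graph_def
  proof (intro conjI allI impI)
    show "finite V'" unfolding V'_def using finV by simp
    show "A' \<subseteq> V' \<times> V'" unfolding A'_def V'_def using AV PV MV by auto
    show "(v,v) \<notin> A'" for v unfolding A'_def using noloop by auto
    show "(v,u) \<notin> A'" if "(u,v) \<in> A'" for u v
      using that PM asym unfolding A'_def by auto
  qed
  have imb'S: "imb_vertex A' (Some v) = 0" if "v \<in> V" for v
  proof -
    have "imb_vertex A' (Some v) = ?i v + (if v \<in> M then 1 else 0) - (if v \<in> P then 1 else 0)"
      unfolding imb_vertex_def in_S out_S
      using fin_in[OF finA] fin_out[OF finA] by (simp add: card_image)
    thus ?thesis using idec[OF that] PM by auto
  qed
  have imb'N: "imb_vertex A' None = 0"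
    unfolding imb_vertex_def in_N out_N using cardPM by (simp add: card_image)
  have imbal: "imbalance V' A' = 0"
  proof -
    have "(\<lambda>v. \<bar>imb_vertex A' v\<bar>) ` V' = {0}"
      unfolding V'_def using imb'S imb'N by auto
    thus ?thesis unfolding imbalance_def by simp
  qed
  have wt'S: "wt A' g (Some v) = 0" if "v \<in> V" for v
  proof -
    have "wt A' g (Some v) = wt A f v + ?i v + (if v \<in> M then 1 else 0) - (if v \<in> P then 1 else 0)"
      unfolding wt_def imb_vertex_def in_S out_S
      using fin_in[OF finA] fin_out[OF finA] by (simp add: sumS gN)
    thus ?thesis using idec[OF that] wt0 that PM by auto
  qed
  have wt'N: "wt A' g None = 0"
    unfolding wt_def in_N out_N using sumPM cardPM finP finM by (simp add: sumS)
  have injf: "inj_on f V" and imf: "f ` V = {1..int n}" using bij unfolding bij_betw_def by auto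
  have injg: "inj_on g V'"
  proof (rule inj_onI)
    fix x y assume "x \<in> V'" "y \<in> V'" "g x = g y"
    have pos: "f v \<ge> 1" if "v \<in> V" for v using imf that by auto
    show "x = y"
    proof (cases x; cases y)
      fix a b assume xa: "x = Some a" and yb: "y = Some b"
      hence "a \<in> V" "b \<in> V" "f a = f b" using \<open>x \<in> V'\<close> \<open>y \<in> V'\<close> \<open>g x = g y\<close>
        unfolding V'_def g_def by auto
      thus ?thesis using injf xa yb by (simp add: inj_on_def)
    next
      fix a assume "x = None" "y = Some a"
      thus ?thesis using \<open>y \<in> V'\<close> \<open>g x = g y\<close> pos unfolding V'_def g_def by fastforce
    next
      fix a assume "x = Some a" "y = None"
      thus ?thesis using \<open>x \<in> V'\<close> \<open>g x = g y\<close> pos unfolding V'_def g_def by fastforce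
    qed simp
  qed
  have img: "g ` V' = {1..int (card V')}"
  proof -
    have "g ` V' = insert 1 ((\<lambda>x. x + 1) ` f ` V)" unfolding V'_def g_def by (auto simp: image_image)
    also have "\<dots> = insert 1 ((\<lambda>x. x + 1) ` {1..int n})" using imf by simp
    also have "(\<lambda>x. x + 1) ` {1..int n} = {2..int n + 1}" by (simp add: image_add_atLeastAtMost')
    also have "insert 1 {2..int n + 1} = {1..int (card V')}" using cardV' by auto
    finally show ?thesis .
  qed
  have "DDM_labeling V' A' g"
    unfolding DDM_labeling_def bij_betw_def using injg img wt'S wt'N unfolding V'_def by auto
  hence "DDMOG V' A'" using og' unfolding DDMOG_def by blast
  moreover have "induced_embedding Some V A V' A'"
    unfolding induced_embedding_def V'_def A'_def by auto
  ultimately show ?thesis using cardV' imbal by blast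
qed

end
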